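(* Let $N(x)=\frac{1}{\sqrt{2\pi}}\int_{-\infty}^x e^{-t^2/2}\,dt$ be the standard normal cumulative distribution function. For $\alpha>0$ define \[ \chi_\alpha(x) := N\Big(\tfrac{\alpha}{2}\big(x-\tfrac{1}{x}\big)\Big) - e^{\alpha^2/2}\, N\Big(-\tfrac{\alpha}{2}\big(x+\tfrac{1}{x}\big)\Big), \qquad x>0. \] Fix $S>0$, $X>0$, $T>0$ with $X\neq S$, and for $\sigma>0$ let \[ \mathscr{C}(\sigma) := S\,N(d_1) - X\,N(d_2),\qquad d_1=\frac{\log(S/X)}{\sigma\sqrt{T}}+\frac{\sigma\sqrt{T}}{2},\quad d_2=\frac{\log(S/X)}{\sigma\sqrt{T}}-\frac{\sigma\sqrt{T}}{2}. \] Put $\alpha:=\sqrt{2\,|\log(S/X)|}$. Then for all $\sigma>0$, \[ \mathscr{C}(\sigma)=\begin{cases} S\,\chi_\alpha\!\left(\frac{\sigma\sqrt{T}}{\alpha}\right) & \text{if } X>S,\\[2mm] S-X+X\,\chi_\alpha\!\left(\frac{\sigma\sqrt{T}}{\alpha}\right) & \text{if } X<S.\end{cases} \]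
   Context: $\mathscr{C}(\sigma)$ is the Black–Scholes price of a European call as a function of the volatility $\sigma$, where $S$ is the value of the underlying, $X$ the present value of the strike, and $T$ the time to maturity. *)

theory Defs
  imports "HOL-Analysis.Analysis"
begin

definition Ncdf :: "real \<Rightarrow> real" where
  "Ncdf x = integral {..x} (\<lambda>t. exp (- (t^2) / 2)) / sqrt (2 * pi)"

definition chi :: "real \<Rightarrow> real \<Rightarrow> real" where
  "chi \<alpha> x = Ncdf (\<alpha> / 2 * (x - 1 / x)) - exp (\<alpha>^2 / 2) * Ncdf (- (\<alpha> / 2) * (x + 1 / x))"

definition BS_call :: "real \<Rightarrow> real \<Rightarrow> real \<Rightarrow> real \<Rightarrow> real" where
  "BS_call S X T \<sigma> =
     (let d1 = ln (S / X) / (\<sigma> * sqrt T) + \<sigma> * sqrt T / 2;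
          d2 = ln (S / X) / (\<sigma> * sqrt T) - \<sigma> * sqrt T / 2
      in S * Ncdf d1 - X * Ncdf d2)"

end

theory Submission
  imports Defs "HOL-Probability.Probability"
begin

lemma gauss_UNIV: "((\<lambda>t::real. exp (- (t^2) / 2)) has_integral sqrt (2 * pi)) UNIV"
proof -
  have "integral\<^sup>L lborel std_normal_density = 1"
    using integral_normal_density[of 0 1] by simp
  then have "(std_normal_density has_integral 1) UNIV"
    using has_integral_integral_lborel[OF integrable_normal_density[of 1 0, OF zero_less_one]] by metis
  then have "((\<lambda>t. sqrt (2 * pi) * std_normal_density t) has_integral sqrt (2 * pi) * 1) UNIV"
    by (rule has_integral_mult_right)
  moreover have "(\<lambda>t. sqrt (2 * pi) * std_normal_density t) = (\<lambda>t::real. exp (- (t^2) / 2))"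
    by (auto simp: std_normal_density_def)
  ultimately show ?thesis by simp
qed

lemma gauss_abs: "(\<lambda>t::real. exp (- (t^2) / 2)) absolutely_integrable_on A"
  if "A \<in> sets lebesgue"
proof -
  have "(\<lambda>t::real. exp (- (t^2) / 2)) absolutely_integrable_on UNIV"
    using gauss_UNIV by (intro nonnegative_absolutely_integrable_1) auto
  then show ?thesis
    unfolding set_integrable_def[symmetric]
    using set_integrable_subset that by blast
qed

lemma Ncdf_sym: "Ncdf y + Ncdf (- y) = 1"
proof -
  define f where "f = (\<lambda>t::real. exp (- (t^2) / 2))"
  have m1: "{..y} \<in> sets lebesgue" "{y..} \<in> sets lebesgue" "{..-y} \<in> sets lebesgue" by auto
  have u1: "uminus ` {y..} \<subseteq> {..-y}" by auto
  have u2: "uminus ` {..-y} \<subseteq> {y..}" by auto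
  have fa: "f absolutely_integrable_on {..-y}" using gauss_abs[OF m1(3)] unfolding f_def .
  have refl: "integral {y..} (\<lambda>x. f (- x)) = integral {..-y} f"
    using has_absolute_integral_reflect_real[OF u1 u2 m1(2), of f "integral {..-y} f"] fa
    by blast
  have fe: "(\<lambda>x. f (- x)) = f" by (auto simp: f_def)
  have i1: "(f has_integral integral {..y} f) {..y}"
    using gauss_abs[OF m1(1)] unfolding f_def
    by (simp add: set_lebesgue_integral_eq_integral(1) integrable_integral)
  have i2: "(f has_integral integral {y..} f) {y..}"
    using gauss_abs[OF m1(2)] unfolding f_def
    by (simp add: set_lebesgue_integral_eq_integral(1) integrable_integral)
  have "(f has_integral (integral {..y} f + integral {y..} f)) ({..y} \<union> {y..})"
  proof (rule has_integral_Un[OF i1 i2])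
    have "{..y} \<inter> {y..} = {y}" by auto
    then show "negligible ({..y} \<inter> {y..})" by simp
  qed
  moreover have "{..y} \<union> {y..} = (UNIV::real set)" by auto
  ultimately have "(f has_integral (integral {..y} f + integral {y..} f)) UNIV" by simp
  then have "integral {..y} f + integral {y..} f = sqrt (2 * pi)"
    using gauss_UNIV has_integral_unique unfolding f_def by blast
  then have "integral {..y} f + integral {..-y} f = sqrt (2 * pi)"
    using refl fe by simp
  then show ?thesis unfolding Ncdf_def f_def[symmetric]
    by (simp add: add_divide_distrib[symmetric])
qed

theorem proposition2:
  fixes S X T \<sigma> :: real
  assumes "S > 0" "X > 0" "T > 0" "X \<noteq> S" "\<sigma> > 0"
  defines "\<alpha> \<equiv> sqrt (2 * \<bar>ln (S / X)\<bar>)"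
  shows "BS_call S X T \<sigma> =
           (if X > S then S * chi \<alpha> (\<sigma> * sqrt T / \<alpha>)
            else S - X + X * chi \<alpha> (\<sigma> * sqrt T / \<alpha>))"
proof -
  define L where "L = ln (S / X)"
  define s where "s = \<sigma> * sqrt T"
  have s0: "s > 0" using assms unfolding s_def by simp
  have L0: "L \<noteq> 0" using assms unfolding L_def by (simp add: divide_eq_1_iff)
  have a0: "\<alpha> > 0" using L0 unfolding \<alpha>_def L_def[symmetric] by simp
  have a2: "\<alpha>^2 = 2 * \<bar>L\<bar>" unfolding \<alpha>_def L_def by simp
  have e1: "\<alpha> / 2 * (s / \<alpha> - 1 / (s / \<alpha>)) = s / 2 - \<bar>L\<bar> / s"
    using a0 s0 a2 by (simp add: field_simps power2_eq_square)
  have e2: "- (\<alpha> / 2) * (s / \<alpha> + 1 / (s / \<alpha>)) = - (s / 2 + \<bar>L\<bar> / s)"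
    using a0 s0 a2 by (simp add: field_simps power2_eq_square)
  have BS: "BS_call S X T \<sigma> = S * Ncdf (L / s + s / 2) - X * Ncdf (L / s - s / 2)"
    unfolding BS_call_def L_def s_def Let_def by simp
  have SX: "S / X = exp L" using assms unfolding L_def by simp
  show ?thesis
  proof (cases "X > S")
    case True
    then have "L < 0" using assms unfolding L_def by (simp add: ln_div)
    then have aL: "\<bar>L\<bar> = - L" by simp
    have em: "exp (- L) = X / S" using SX by (metis exp_minus inverse_divide)
    have "\<alpha>^2 / 2 = - L" using a2 aL by simp
    then have ex: "exp (\<alpha>^2 / 2) = X / S" using em by simp
    have f1: "\<alpha> / 2 * (s / \<alpha> - 1 / (s / \<alpha>)) = L / s + s / 2"
      using e1 aL by simp
    have f2: "- (\<alpha> / 2) * (s / \<alpha> + 1 / (s / \<alpha>)) = L / s - s / 2"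
      using e2 aL by simp
    have "chi \<alpha> (s / \<alpha>) = Ncdf (L / s + s / 2) - X / S * Ncdf (L / s - s / 2)"
      unfolding chi_def f1 f2 ex ..
    then have "S * chi \<alpha> (s / \<alpha>) = S * Ncdf (L / s + s / 2) - X * Ncdf (L / s - s / 2)"
      using assms by (simp add: right_diff_distrib)
    then show ?thesis using True BS unfolding s_def by simp
  next
    case False
    then have "L > 0" using assms unfolding L_def by (simp add: ln_div)
    then have aL: "\<bar>L\<bar> = L" by simp
    have ex: "exp (\<alpha>^2 / 2) = S / X" using a2 aL SX by simp
    have f1: "\<alpha> / 2 * (s / \<alpha> - 1 / (s / \<alpha>)) = - (L / s - s / 2)"
      using e1 aL by simp
    have f2: "- (\<alpha> / 2) * (s / \<alpha> + 1 / (s / \<alpha>)) = - (L / s + s / 2)"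
      using e2 aL by (simp add: add.commute)
    have n1: "Ncdf (- (L / s - s / 2)) = 1 - Ncdf (L / s - s / 2)"
      using Ncdf_sym[of "L / s - s / 2"] by simp
    have n2: "Ncdf (- (L / s + s / 2)) = 1 - Ncdf (L / s + s / 2)"
      using Ncdf_sym[of "L / s + s / 2"] by simp
    have "chi \<alpha> (s / \<alpha>) = (1 - Ncdf (L / s - s / 2)) - S / X * (1 - Ncdf (L / s + s / 2))"
      unfolding chi_def f1 f2 ex n1 n2 ..
    then have "X * chi \<alpha> (s / \<alpha>) = X * ((1 - Ncdf (L / s - s / 2)) - S / X * (1 - Ncdf (L / s + s / 2)))"
      by simp
    also have "\<dots> = X - X * Ncdf (L / s - s / 2) - S + S * Ncdf (L / s + s / 2)"
      using assms by (simp add: algebra_simps)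
    finally have "X * chi \<alpha> (s / \<alpha>) = X - X * Ncdf (L / s - s / 2) - S + S * Ncdf (L / s + s / 2)" .
    then show ?thesis using False BS unfolding s_def by simp
  qed
qed

end
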